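(* For every sufficiently large prime $p$, there is a set $A\subset\{1,2,\dots,\lfloor p/2\rfloor-1\}$ such that (i) the sets $A$ and $A+A+\{0,1\}$ are disjoint, and (ii) $A+A+A$ contains $p+2$ consecutive integers.
   Context: For sets $X,Y\subset\mathbb Z$, $X+Y=\{x+y:x\in X,y\in Y\}$. *)

theory Defs
  imports Main "HOL-Computational_Algebra.Primes"
begin

definition sumset :: "int set \<Rightarrow> int set \<Rightarrow> int set" where
  "sumset X Y = {x + y | x y. x \<in> X \<and> y \<in> Y}"

end

theory Submission
  imports Defs
begin

definition inA :: "int \<Rightarrow> int \<Rightarrow> bool" where
  "inA l x \<longleftrightarrow> x = l \<or> (l+3 \<le> x \<and> x \<le> 2*l-5) \<or> x = 2*l+2 \<or>
     (4*l \<le> x \<and> x \<le> 4*l+2) \<or> (4*l+6 \<le> x \<and> x \<le> 5*l-1)"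

lemma disj_A:
  assumes "l \<ge> 30" "inA l a" "inA l b"
  shows "\<not> inA l (a+b) \<and> \<not> inA l (a+b+1)"
  using assms unfolding inA_def by auto

lemma tri:
  fixes a1 b1 a2 b2 a3 b3 t :: int
  assumes "a1 \<le> b1" "a2 \<le> b2" "a3 \<le> b3" "a1+a2+a3 \<le> t" "t \<le> b1+b2+b3"
  shows "\<exists>x y z. a1\<le>x \<and> x\<le>b1 \<and> a2\<le>y \<and> y\<le>b2 \<and> a3\<le>z \<and> z\<le>b3 \<and> t = x+y+z"
proof -
  define x where "x = min b1 (t-a2-a3)"
  define y where "y = min b2 (t-x-a3)"
  define z where "z = t-x-y"
  show ?thesis
    apply (rule exI[of _ x], rule exI[of _ y], rule exI[of _ z])
    using assms unfolding x_def y_def z_def by (auto simp: min_def)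
qed

lemma tri3:
  fixes a1 b1 a2 b2 a3 b3 t :: int
  assumes "a1 \<le> b1" "a2 \<le> b2" "a3 \<le> b3" "a1+a2+a3 \<le> t" "t \<le> b1+b2+b3"
    and "\<And>x. a1\<le>x \<Longrightarrow> x\<le>b1 \<Longrightarrow> inA l x"
    and "\<And>x. a2\<le>x \<Longrightarrow> x\<le>b2 \<Longrightarrow> inA l x"
    and "\<And>x. a3\<le>x \<Longrightarrow> x\<le>b3 \<Longrightarrow> inA l x"
  shows "\<exists>x y z. inA l x \<and> inA l y \<and> inA l z \<and> t = x+y+z"
  using tri[OF assms(1-5)] assms(6-8) by blast

lemma cover:
  fixes l t :: int
  assumes "l \<ge> 30" "4*l \<le> t" "t \<le> 14*l+11"
  shows "\<exists>x y z. inA l x \<and> inA l y \<and> inA l z \<and> t = x+y+z"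
proof -
  have pa: "\<And>x. l \<le> x \<Longrightarrow> x \<le> l \<Longrightarrow> inA l x" by (simp add: inA_def)
  have pb: "\<And>x. l+3 \<le> x \<Longrightarrow> x \<le> 2*l-5 \<Longrightarrow> inA l x" by (simp add: inA_def)
  have pc: "\<And>x. 2*l+2 \<le> x \<Longrightarrow> x \<le> 2*l+2 \<Longrightarrow> inA l x" by (simp add: inA_def)
  have pd: "\<And>x. 4*l \<le> x \<Longrightarrow> x \<le> 4*l+2 \<Longrightarrow> inA l x" by (simp add: inA_def)
  have pe: "\<And>x. 4*l+6 \<le> x \<Longrightarrow> x \<le> 5*l-1 \<Longrightarrow> inA l x" by (simp add: inA_def)
  consider "t \<le> 6*l-15" | "5*l+7 \<le> t \<and> t \<le> 6*l-1" | "6*l \<le> t \<and> t \<le> 6*l+2"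
    | "6*l+3 \<le> t \<and> t \<le> 7*l-3" | "6*l+12 \<le> t \<and> t \<le> 9*l-11"
    | "8*l+10 \<le> t \<and> t \<le> 9*l+3" | "9*l+3 \<le> t \<and> t \<le> 10*l-1"
    | "9*l+9 \<le> t \<and> t \<le> 11*l-4" | "10*l+14 \<le> t \<and> t \<le> 12*l"
    | "12*l \<le> t \<and> t \<le> 12*l+6" | "12*l+6 \<le> t \<and> t \<le> 13*l+3"
    | "12*l+18 \<le> t"
    using assms by linarith
  then show ?thesis
  proof cases
    case 1 show ?thesis by (rule tri3[of "l+3" "2*l-5" "l+3" "2*l-5" "l+3" "2*l-5" t l, OF _ _ _ _ _ pb pb pb]) (use 1 assms in auto)
  next
    case 2 show ?thesis by (rule tri3[of "l+3" "2*l-5" "2*l+2" "2*l+2" "2*l+2" "2*l+2" t l, OF _ _ _ _ _ pb pc pc]) (use 2 assms in auto)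
  next
    case 3 show ?thesis by (rule tri3[of l l l l "4*l" "4*l+2" t l, OF _ _ _ _ _ pa pa pd]) (use 3 assms in auto)
  next
    case 4 show ?thesis by (rule tri3[of l l "l+3" "2*l-5" "4*l" "4*l+2" t l, OF _ _ _ _ _ pa pb pd]) (use 4 assms in auto)
  next
    case 5 show ?thesis by (rule tri3[of "l+3" "2*l-5" "l+3" "2*l-5" "4*l+6" "5*l-1" t l, OF _ _ _ _ _ pb pb pe]) (use 5 assms in auto)
  next
    case 6 show ?thesis by (rule tri3[of "2*l+2" "2*l+2" "2*l+2" "2*l+2" "4*l+6" "5*l-1" t l, OF _ _ _ _ _ pc pc pe]) (use 6 assms in auto)
  next
    case 7 show ?thesis by (rule tri3[of "l+3" "2*l-5" "4*l" "4*l+2" "4*l" "4*l+2" t l, OF _ _ _ _ _ pb pd pd]) (use 7 assms in auto)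
  next
    case 8 show ?thesis by (rule tri3[of "l+3" "2*l-5" "4*l" "4*l+2" "4*l+6" "5*l-1" t l, OF _ _ _ _ _ pb pd pe]) (use 8 assms in auto)
  next
    case 9 show ?thesis by (rule tri3[of "2*l+2" "2*l+2" "4*l+6" "5*l-1" "4*l+6" "5*l-1" t l, OF _ _ _ _ _ pc pe pe]) (use 9 assms in auto)
  next
    case 10 show ?thesis by (rule tri3[of "4*l" "4*l+2" "4*l" "4*l+2" "4*l" "4*l+2" t l, OF _ _ _ _ _ pd pd pd]) (use 10 assms in auto)
  next
    case 11 show ?thesis by (rule tri3[of "4*l" "4*l+2" "4*l" "4*l+2" "4*l+6" "5*l-1" t l, OF _ _ _ _ _ pd pd pe]) (use 11 assms in auto)
  next
    case 12 show ?thesis by (rule tri3[of "4*l+6" "5*l-1" "4*l+6" "5*l-1" "4*l+6" "5*l-1" t l, OF _ _ _ _ _ pe pe pe]) (use 12 assms in auto)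
  qed
qed

theorem lemma3p1:
  shows "\<exists>P::nat. \<forall>p::nat. prime p \<and> p \<ge> P \<longrightarrow>
    (\<exists>A::int set. A \<subseteq> {1 .. int (p div 2) - 1} \<and>
       A \<inter> sumset (sumset A A) {0, 1} = {} \<and>
       (\<exists>m::int. {m .. m + int p + 1} \<subseteq> sumset (sumset A A) A))"
proof (rule exI[of _ 400], intro allI impI)
  fix p :: nat
  assume "prime p \<and> p \<ge> 400"
  hence p400: "p \<ge> 400" by simp
  define n where "n = p div 2"
  define l where "l = int (n div 5)"
  have h1: "5 * (n div 5) \<le> n" "n < 5 * (n div 5) + 5" "p \<le> 2*n+1" "n \<ge> 200"
    using p400 unfolding n_def by auto
  have l30: "l \<ge> 30" using h1 unfolding l_def by linarith
  have hn: "5*l \<le> int n" "int n \<le> 5*l+4" "int p \<le> 2 * int n + 1"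
    using h1 unfolding l_def by linarith+
  let ?A = "{x. inA l x}"
  show "\<exists>A::int set. A \<subseteq> {1 .. int (p div 2) - 1} \<and>
       A \<inter> sumset (sumset A A) {0, 1} = {} \<and>
       (\<exists>m::int. {m .. m + int p + 1} \<subseteq> sumset (sumset A A) A)"
  proof (intro exI[of _ ?A] conjI)
    show "?A \<subseteq> {1 .. int (p div 2) - 1}"
      using hn l30 unfolding n_def[symmetric] by (auto simp: inA_def)
    show "?A \<inter> sumset (sumset ?A ?A) {0, 1} = {}"
      using disj_A[OF l30] by (fastforce simp: sumset_def)
    show "\<exists>m. {m .. m + int p + 1} \<subseteq> sumset (sumset ?A ?A) ?A"
    proof (intro exI[of _ "4*l"] subsetI)
      fix t assume "t \<in> {4*l .. 4*l + int p + 1}"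
      hence "4*l \<le> t" "t \<le> 14*l+11" using hn by auto
      then obtain x y z where "inA l x" "inA l y" "inA l z" "t = x+y+z"
        using cover[OF l30] by blast
      thus "t \<in> sumset (sumset ?A ?A) ?A" unfolding sumset_def by blast
    qed
  qed
qed

end
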